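(* Let $X$ and $Y$ be Banach spaces and $E=X\oplus_\infty Y$. If $x\in S_X$ is a ccs Daugavet point of $X$, then $(x,y)$ is a ccs Daugavet point of $E$ for every $y\in B_Y$.
   Context: $X\oplus_\infty Y$ is $X\times Y$ with norm $\|(x,y)\|=\max\{\|x\|,\|y\|\}$. A slice of the unit ball $B_Z$ of a Banach space $Z$ is a non-empty set $\{z\in B_Z:\operatorname{Re}z^*(z)>\|z^*\|-\delta\}$ with $z^*\in Z^*$, $\delta>0$; a ccs of $B_Z$ is $\sum_{i=1}^n\lambda_iS_i$ with $\lambda_i\in(0,1]$, $\sum\lambda_i=1$, $S_i$ slices. $z\in S_Z$ is a ccs Daugavet point if $\sup_{w\in C}\|z-w\|=2$ for every ccs $C$ of $B_Z$. *)

theory Defs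
  imports "HOL-Analysis.Analysis"
begin

datatype ('a, 'b) linf = LInf 'a 'b

fun linf_fst where "linf_fst (LInf a b) = a"
fun linf_snd where "linf_snd (LInf a b) = b"

lemma linf_eqI: "linf_fst p = linf_fst q \<Longrightarrow> linf_snd p = linf_snd q \<Longrightarrow> p = q"
  by (cases p; cases q) auto

instantiation linf :: (real_vector, real_vector) real_vector
begin
definition "0 = LInf 0 0"
definition "p + q = LInf (linf_fst p + linf_fst q) (linf_snd p + linf_snd q)"
definition "p - q = LInf (linf_fst p - linf_fst q) (linf_snd p - linf_snd q)"
definition "- p = LInf (- linf_fst p) (- linf_snd p)"
definition "scaleR r p = LInf (scaleR r (linf_fst p)) (scaleR r (linf_snd p))"
instance
  by standard (auto intro!: linf_eqI simp: zero_linf_def plus_linf_def minus_linf_def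
      uminus_linf_def scaleR_linf_def algebra_simps)
end

instantiation linf :: (real_normed_vector, real_normed_vector) real_normed_vector
begin
definition norm_linf :: "('a, 'b) linf \<Rightarrow> real" where
  "norm_linf p = max (norm (linf_fst p)) (norm (linf_snd p))"
definition sgn_linf :: "('a, 'b) linf \<Rightarrow> ('a, 'b) linf" where
  "sgn_linf p = inverse (norm p) *\<^sub>R p"
definition dist_linf :: "('a, 'b) linf \<Rightarrow> ('a, 'b) linf \<Rightarrow> real" where
  "dist_linf p q = norm (p - q)"
definition uniformity_linf :: "(('a, 'b) linf \<times> ('a, 'b) linf) filter" where
  "uniformity_linf = (INF e\<in>{0<..}. principal {(x, y). dist x y < e})"
definition open_linf :: "('a, 'b) linf set \<Rightarrow> bool" where
  "open_linf U = (\<forall>x\<in>U. \<forall>\<^sub>F (x', y) in uniformity. x' = x \<longrightarrow> y \<in> U)"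
instance
proof
  fix p q :: "('a, 'b) linf" and r :: real
  show "(norm p = 0) = (p = 0)"
    by (cases p) (auto simp: norm_linf_def zero_linf_def max_def)
  show "norm (p + q) \<le> norm p + norm q"
    unfolding norm_linf_def plus_linf_def
    using norm_triangle_ineq[of "linf_fst p" "linf_fst q"]
          norm_triangle_ineq[of "linf_snd p" "linf_snd q"]
    by simp linarith
  show "norm (r *\<^sub>R p) = \<bar>r\<bar> * norm p"
    by (simp add: norm_linf_def scaleR_linf_def max_mult_distrib_left)
qed (auto simp: sgn_linf_def dist_linf_def uniformity_linf_def open_linf_def)
end

lemma norm_LInf: "norm (LInf a b) = max (norm a) (norm b)"
  by (simp add: norm_linf_def)

definition slice :: "('a::real_normed_vector \<Rightarrow> real) \<Rightarrow> real \<Rightarrow> 'a set" where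
  "slice f \<delta> = {z. norm z \<le> 1 \<and> f z > onorm f - \<delta>}"

definition is_slice :: "'a::real_normed_vector set \<Rightarrow> bool" where
  "is_slice S \<longleftrightarrow> (\<exists>f \<delta>. bounded_linear f \<and> \<delta> > 0 \<and> S = slice f \<delta> \<and> S \<noteq> {})"

text \<open>Convex combination of slices: sum_{i<n} lambda_i S_i (Minkowski sum).\<close>
definition is_ccs :: "'a::real_normed_vector set \<Rightarrow> bool" where
  "is_ccs C \<longleftrightarrow> (\<exists>n::nat. \<exists>lam :: nat \<Rightarrow> real. \<exists>S :: nat \<Rightarrow> 'a set.
      n \<ge> 1 \<and> (\<forall>i<n. 0 < lam i \<and> lam i \<le> 1 \<and> is_slice (S i)) \<and> (\<Sum>i<n. lam i) = 1 \<and>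
      C = {(\<Sum>i<n. lam i *\<^sub>R z i) | z. \<forall>i<n. z i \<in> S i})"

definition ccs_daugavet_point :: "'a::real_normed_vector \<Rightarrow> bool" where
  "ccs_daugavet_point z \<longleftrightarrow> norm z = 1 \<and>
     (\<forall>C. is_ccs C \<longrightarrow> (SUP w\<in>C. norm (z - w)) = 2)"

end

theory Submission
  imports Defs
begin

lemma slice_witness:
  fixes f :: "'a::real_normed_vector \<Rightarrow> real"
  assumes f: "bounded_linear f" and d: "\<delta> > 0"
  shows "\<exists>z. norm z \<le> 1 \<and> f z > onorm f - \<delta>"
proof -
  have bdd: "bdd_above (range (\<lambda>x. norm (f x) / norm x))"
    using le_onorm[OF f] unfolding bdd_above_def by fast
  have "onorm f - \<delta> < (SUP x. norm (f x) / norm x)"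
    using d unfolding onorm_def by simp
  then obtain x where x: "onorm f - \<delta> < norm (f x) / norm x"
    using less_cSUP_iff[OF _ bdd] by auto
  show ?thesis
  proof (cases "x = 0")
    case True
    then have "onorm f - \<delta> < 0" using x by simp
    then show ?thesis by (intro exI[of _ 0]) (simp add: linear_simps(3)[OF f])
  next
    case False
    interpret bounded_linear f by fact
    have nx: "norm x > 0" using False by simp
    show ?thesis
    proof (cases "f x \<ge> 0")
      case True
      have "f (x /\<^sub>R norm x) = norm (f x) / norm x"
        using True by (simp add: scale divide_inverse_commute)
      then show ?thesis using x nx by (intro exI[of _ "x /\<^sub>R norm x"]) simp
    next
      case False
      have "f (- (x /\<^sub>R norm x)) = norm (f x) / norm x"
        using False by (simp add: scale neg divide_inverse_commute)
      then show ?thesis using x nx by (intro exI[of _ "- (x /\<^sub>R norm x)"]) simp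
    qed
  qed
qed

lemma conv_norm_le1:
  fixes z :: "nat \<Rightarrow> 'a::real_normed_vector"
  assumes "\<forall>i<n. 0 < lam i \<and> norm (z i) \<le> 1" "(\<Sum>i<n. lam i) = 1"
  shows "norm (\<Sum>i<n. lam i *\<^sub>R z i) \<le> 1"
proof -
  have "norm (\<Sum>i<n. lam i *\<^sub>R z i) \<le> (\<Sum>i<n. norm (lam i *\<^sub>R z i))"
    by (rule norm_sum)
  also have "\<dots> \<le> (\<Sum>i<n. lam i)"
    using assms(1) by (intro sum_mono) (auto intro: mult_left_le)
  finally show ?thesis using assms(2) by simp
qed

lemma ccs_bounded:
  fixes C :: "'a::real_normed_vector set"
  assumes "is_ccs C" "w \<in> C" shows "norm w \<le> 1"
proof -
  obtain n lam S where h: "(n::nat) \<ge> 1" "\<forall>i<n. 0 < lam i \<and> lam i \<le> 1 \<and> is_slice (S i)"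
    "(\<Sum>i<n. lam i) = 1" "C = {(\<Sum>i<n. lam i *\<^sub>R z i) | z. \<forall>i<n. z i \<in> S i}"
    using assms(1) unfolding is_ccs_def by blast
  obtain z where z: "\<forall>i<n. z i \<in> S i" "w = (\<Sum>i<n. lam i *\<^sub>R z i)" using h(4) assms(2) by blast
  have "\<forall>i<n. norm (z i) \<le> 1"
    using z(1) h(2) unfolding is_slice_def slice_def by fastforce
  then show ?thesis using conv_norm_le1[of n lam z] h z by simp
qed

lemma ccs_nonempty:
  assumes "is_ccs C" shows "C \<noteq> {}"
proof -
  obtain n lam S where h: "(n::nat) \<ge> 1" "\<forall>i<n. 0 < lam i \<and> lam i \<le> 1 \<and> is_slice (S i)"
    "(\<Sum>i<n. lam i) = 1" "C = {(\<Sum>i<n. lam i *\<^sub>R z i) | z. \<forall>i<n. z i \<in> S i}"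
    using assms(1) unfolding is_ccs_def by blast
  have "\<forall>i. \<exists>a. i < n \<longrightarrow> a \<in> S i" using h(2) unfolding is_slice_def by blast
  then obtain z where "\<forall>i. i < n \<longrightarrow> z i \<in> S i" by metis
  then show ?thesis using h(4) by blast
qed

lemma linf_fst_sum: "linf_fst (\<Sum>i\<in>A. h i) = (\<Sum>i\<in>A. linf_fst (h i))"
  by (induction A rule: infinite_finite_induct) (auto simp: zero_linf_def plus_linf_def)

lemma linf_fst_scale: "linf_fst (r *\<^sub>R p) = r *\<^sub>R linf_fst p"
  by (simp add: scaleR_linf_def)

lemma sup_eq2:
  fixes h :: "'c \<Rightarrow> real"
  assumes "C \<noteq> {}" "\<forall>w\<in>C. h w \<le> 2" "\<forall>e>0. \<exists>w\<in>C. h w > 2 - e"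
  shows "(SUP w\<in>C. h w) = 2"
proof (rule antisym)
  show "(SUP w\<in>C. h w) \<le> 2" using assms by (intro cSUP_least) auto
  have bdd: "bdd_above (h ` C)" using assms(2) unfolding bdd_above_def by blast
  show "2 \<le> (SUP w\<in>C. h w)"
  proof (rule ccontr)
    assume "\<not> 2 \<le> (SUP w\<in>C. h w)"
    then obtain w where "w \<in> C" "h w > (SUP w\<in>C. h w)"
      using assms(3)[rule_format, of "2 - (SUP w\<in>C. h w)"] by auto
    then show False using cSUP_upper[OF _ bdd] by fastforce
  qed
qed

theorem mainTheorem9:
  fixes x :: "'a::banach" and y :: "'b::banach"
  assumes "ccs_daugavet_point x"
    and "norm y \<le> 1"
  shows "ccs_daugavet_point (LInf x y)"
proof -
  have nx: "norm x = 1" and D: "\<And>C. is_ccs C \<Longrightarrow> (SUP w\<in>C. norm (x - w)) = 2"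
    using assms(1) unfolding ccs_daugavet_point_def by auto
  have np: "norm (LInf x y) = 1" using nx assms(2) by (simp add: norm_LInf)
  have "(SUP w\<in>C. norm (LInf x y - w)) = 2" if C: "is_ccs C" for C :: "('a,'b) linf set"
  proof -
    obtain n lam S where h: "(n::nat) \<ge> 1" "\<forall>i<n. 0 < lam i \<and> lam i \<le> 1 \<and> is_slice (S i)"
      "(\<Sum>i<n. lam i) = 1" "C = {(\<Sum>i<n. lam i *\<^sub>R z i) | z. \<forall>i<n. z i \<in> S i}"
      using C unfolding is_ccs_def by blast
    have "\<forall>i. \<exists>F d. i < n \<longrightarrow> bounded_linear F \<and> d > 0 \<and> S i = slice F d"
      using h(2) unfolding is_slice_def by blast
    then obtain F d where Fd: "\<And>i. i < n \<Longrightarrow> bounded_linear (F i) \<and> d i > 0 \<and> S i = slice (F i) (d i)"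
      by metis
    define f where "f i = (\<lambda>a. F i (LInf a 0))" for i
    define g where "g i = (\<lambda>b. F i (LInf 0 b))" for i
    have blf: "bounded_linear (f i)" if "i < n" for i
    proof -
      have "bounded_linear (\<lambda>a::'a. LInf a (0::'b))"
        by (rule bounded_linear_intro[where K=1])
          (auto simp: plus_linf_def scaleR_linf_def norm_LInf)
      then show ?thesis unfolding f_def
        by (rule bounded_linear_compose[OF conjunct1[OF Fd[OF that]]])
    qed
    have blg: "bounded_linear (g i)" if "i < n" for i
    proof -
      have "bounded_linear (\<lambda>b::'b. LInf (0::'a) b)"
        by (rule bounded_linear_intro[where K=1])
          (auto simp: plus_linf_def scaleR_linf_def norm_LInf)
      then show ?thesis unfolding g_def
        by (rule bounded_linear_compose[OF conjunct1[OF Fd[OF that]]])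
    qed
    have split: "F i (LInf a b) = f i a + g i b" if "i < n" for i a b
    proof -
      interpret bounded_linear "F i" using Fd[OF that] by blast
      have "LInf a b = LInf a 0 + LInf 0 b" by (simp add: plus_linf_def)
      then show ?thesis unfolding f_def g_def by (metis add)
    qed
    have onF: "onorm (F i) \<le> onorm (f i) + onorm (g i)" if "i < n" for i
    proof (rule onorm_bound)
      show "0 \<le> onorm (f i) + onorm (g i)"
        using onorm_pos_le[OF blf[OF that]] onorm_pos_le[OF blg[OF that]] by simp
      fix p :: "('a,'b) linf"
      obtain a b where p: "p = LInf a b" by (cases p)
      have "norm (F i p) \<le> norm (f i a) + norm (g i b)"
        using split[OF that] p by (simp add: abs_triangle_ineq)
      also have "\<dots> \<le> onorm (f i) * norm a + onorm (g i) * norm b"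
        using onorm[OF blf[OF that]] onorm[OF blg[OF that]] by (intro add_mono)
      also have "\<dots> \<le> onorm (f i) * norm p + onorm (g i) * norm p"
        using p onorm_pos_le[OF blf[OF that]] onorm_pos_le[OF blg[OF that]]
        by (intro add_mono mult_left_mono) (auto simp: norm_LInf)
      finally show "norm (F i p) \<le> (onorm (f i) + onorm (g i)) * norm p"
        by (simp add: algebra_simps)
    qed
    have "\<forall>i. \<exists>b. i < n \<longrightarrow> norm b \<le> 1 \<and> g i b > onorm (g i) - d i / 2"
      using slice_witness blg Fd by (metis half_gt_zero)
    then obtain b where b: "\<And>i. i < n \<Longrightarrow> norm (b i) \<le> 1 \<and> g i (b i) > onorm (g i) - d i / 2"
      by metis
    define T where "T i = slice (f i) (d i / 2)" for i
    define C' where "C' = {(\<Sum>i<n. lam i *\<^sub>R a i) | a. \<forall>i<n. a i \<in> T i}"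
    have T_slice: "is_slice (T i)" if i: "i < n" for i
    proof -
      obtain z where "norm z \<le> 1 \<and> f i z > onorm (f i) - d i / 2"
        using slice_witness[OF blf[OF i], of "d i / 2"] Fd[OF i] by auto
      then have "T i \<noteq> {}" unfolding T_def slice_def by auto
      then show ?thesis unfolding is_slice_def T_def using blf[OF i] Fd[OF i] by (metis half_gt_zero)
    qed
    have C'ccs: "is_ccs C'"
      unfolding is_ccs_def C'_def using h T_slice by blast
    have sup': "(SUP w\<in>C'. norm (x - w)) = 2" using D[OF C'ccs] .
    have C'bd: "\<forall>w\<in>C'. norm (x - w) \<le> 2"
    proof
      fix w assume "w \<in> C'"
      then have "norm w \<le> 1" using ccs_bounded[OF C'ccs] by blast
      then show "norm (x - w) \<le> 2" using nx norm_triangle_ineq4[of x w] by linarith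
    qed
    have mem: "LInf a (b i) \<in> S i" if "i < n" "a \<in> T i" for i a
    proof -
      have a: "norm a \<le> 1" "f i a > onorm (f i) - d i / 2"
        using that(2) unfolding T_def slice_def by auto
      have "F i (LInf a (b i)) > onorm (F i) - d i"
        using split[OF that(1)] a b[OF that(1)] onF[OF that(1)] by simp
      moreover have "norm (LInf a (b i)) \<le> 1" using a b[OF that(1)] by (simp add: norm_LInf)
      ultimately show ?thesis using Fd[OF that(1)] unfolding slice_def by auto
    qed
    show ?thesis
    proof (rule sup_eq2)
      show "C \<noteq> {}" using ccs_nonempty[OF C] .
      show "\<forall>w\<in>C. norm (LInf x y - w) \<le> 2"
      proof
        fix w assume "w \<in> C"
        then have "norm w \<le> 1" using ccs_bounded[OF C] by blast
        then show "norm (LInf x y - w) \<le> 2" using np norm_triangle_ineq4[of "LInf x y" w] by linarith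
      qed
      show "\<forall>e>0. \<exists>w\<in>C. norm (LInf x y - w) > 2 - e"
      proof (intro allI impI)
        fix e :: real assume e: "e > 0"
        have bdd: "bdd_above ((\<lambda>w. norm (x - w)) ` C')"
          using C'bd unfolding bdd_above_def by blast
        have "2 - e < (SUP w\<in>C'. norm (x - w))" using sup' e by simp
        then obtain w' where w': "w' \<in> C'" "2 - e < norm (x - w')"
          using less_cSUP_iff[OF ccs_nonempty[OF C'ccs] bdd] by auto
        obtain a where a: "\<forall>i<n. a i \<in> T i" "w' = (\<Sum>i<n. lam i *\<^sub>R a i)"
          using w'(1) unfolding C'_def by blast
        define w where "w = (\<Sum>i<n. lam i *\<^sub>R LInf (a i) (b i))"
        have "w \<in> C" unfolding h(4) w_def using mem a(1) by (intro CollectI exI[of _ "\<lambda>i. LInf (a i) (b i)"]) auto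
        moreover have "linf_fst (LInf x y - w) = x - w'"
          unfolding w_def a(2) by (simp add: minus_linf_def linf_fst_sum linf_fst_scale)
        then have "norm (x - w') \<le> norm (LInf x y - w)"
          by (metis norm_linf_def max.cobounded1)
        ultimately show "\<exists>w\<in>C. norm (LInf x y - w) > 2 - e" using w'(2) by force
      qed
    qed
  qed
  then show ?thesis unfolding ccs_daugavet_point_def using np by blast
qed

end
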